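(* Let $c,d\in\mathbb{R}_{>0}$ with $cd\le\frac14$. Consider a sequence of positive reals $z_0,z_1,z_2,\ldots$ with $z_0\le\frac1{2d}$ and $z_{n+1}\le c+dz_n^2$ for all $n\ge0$. Then $z_n\le3c$ for all $n\ge\log_2\frac1{cd}-1$. *)

theory Defs
  imports Complex_Main
begin

end

theory Submission
  imports Defs
begin

theorem lemma4p7:
  fixes c d :: real and z :: "nat \<Rightarrow> real"
  assumes "c > 0" and "d > 0" and "c * d \<le> 1/4"
    and "\<And>n. z n > 0"
    and "z 0 \<le> 1 / (2 * d)"
    and "\<And>n. z (Suc n) \<le> c + d * (z n)^2"
  shows "\<forall>n::nat. real n \<ge> log 2 (1 / (c * d)) - 1 \<longrightarrow> z n \<le> 3 * c"
proof (intro allI impI)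
  have key: "d * z n \<le> 1/2 \<and> d * z n \<le> 2 * (c * d) + (1/2)^(n+1)" for n
  proof (induction n)
    case 0
    have "d * z 0 \<le> 1/2" using assms(2,5) by (simp add: field_simps)
    moreover have "c*d > 0" using assms(1,2) by simp
    ultimately show ?case by simp
  next
    case (Suc n)
    define w where "w = d * z n"
    have w0: "w > 0" using assms(2,4) w_def by simp
    have w1: "w \<le> 1/2" and w2: "w \<le> 2*(c*d) + (1/2)^(n+1)" using Suc w_def by auto
    have "w^2 \<le> w/2" using w0 w1 by (simp add: power2_eq_square mult_left_mono)
    have "d * z (Suc n) \<le> d * (c + d * (z n)^2)"
      using assms(2,6) mult_left_mono by (metis less_imp_le)
    also have "\<dots> = c*d + w^2" by (simp add: w_def power2_eq_square algebra_simps)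
    finally have A: "d * z (Suc n) \<le> c*d + w/2" using \<open>w^2 \<le> w/2\<close> by linarith
    show ?case using A w1 w2 assms(3) by auto
  qed
  fix n :: nat
  assume h: "real n \<ge> log 2 (1 / (c * d)) - 1"
  have cd: "c*d > 0" using assms by simp
  have "1/(c*d) = 2 powr (log 2 (1/(c*d)))" using cd by simp
  also have "\<dots> \<le> 2 powr (real n + 1)" using h by (intro powr_mono) auto
  also have "\<dots> = 2^(n+1)" using powr_realpow[of 2 "n+1"] by (simp add: add.commute)
  finally have "1/(c*d) \<le> 2^(n+1)" .
  hence "(1/2::real)^(n+1) \<le> c*d" using cd by (simp add: field_simps power_divide)
  hence "d * z n \<le> 3 * (c*d)" using key[of n] by linarith
  thus "z n \<le> 3 * c" using assms(2) by (simp add: mult.commute mult.left_commute)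
qed

end
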